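(* Let $P$ be a finite $(3+1)$-free poset and let $\mathsf a=a_na_{n-1}\cdots a_1$, $\mathsf b=b_nb_{n-1}\cdots b_1$ and $\mathsf v$ be words in the alphabet $P$ such that (i) the words $\mathsf a\mathsf v$ and $\mathsf b\mathsf v$ are $P$-strictly decreasing; (ii) $b_i\not<_Pa_i$ for all $i\in[n]$; (iii) $a_i<_Pb_{i+1}$ for all $i\in[n-1]$. Then $\mathbf{u}_{\mathsf a}\mathbf{u}_{\mathsf v}\mathbf{u}_{\mathsf b}\equiv\mathbf{u}_{\mathsf a}\mathbf{u}_{\mathsf b}\mathbf{u}_{\mathsf v}\pmod{I^P_{\mathrm{plac}}}$.
   Context: $a<_Pb$: strict order; $a\sim_Pb$: incomparable or equal. A word $w_1\cdots w_m$ is $P$-strictly decreasing if $w_1>_Pw_2>_P\cdots>_Pw_m$. $\mathcal{U}_P=\mathbb{Z}\langle u_a:a\in P\rangle$, $\mathbf{u}_w=u_{w_1}\cdots u_{w_m}$. $I^P_{\mathrm{plac}}$ is the two-sided ideal generated by: $u_bu_au_c-u_bu_cu_a$ when $a<_Pb$, $c\not<_Pb$, $a<_Pc$; $u_cu_au_b-u_au_cu_b$ when $b\not<_Pa$, $b<_Pc$, $a<_Pc$; $u_cu_au_b-u_bu_cu_a$ when $a\sim_Pb$, $b\sim_Pc$, $a<_Pc$. *)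

theory Defs
  imports Main
begin

text \<open>The poset P is the (finite) type 'a with its partial order.
  Elements of the free associative ring Z<u_a : a in P> are represented as
  finitely supported functions from words (lists over 'a) to int.\<close>

definition incomp :: "'a::order \<Rightarrow> 'a \<Rightarrow> bool" where
  "incomp a b \<longleftrightarrow> \<not> a < b \<and> \<not> b < a"

definition three_one_free :: "'a::order itself \<Rightarrow> bool" where
  "three_one_free _ \<longleftrightarrow> \<not> (\<exists>x y z w :: 'a. x < y \<and> y < z \<and>
      \<not> w \<le> x \<and> \<not> x \<le> w \<and> \<not> w \<le> y \<and> \<not> y \<le> w \<and> \<not> w \<le> z \<and> \<not> z \<le> w)"

definition strictly_decr :: "'a::order list \<Rightarrow> bool" where
  "strictly_decr w \<longleftrightarrow> (\<forall>i. Suc i < length w \<longrightarrow> w ! i > w ! Suc i)"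

definition mon :: "'a list \<Rightarrow> ('a list \<Rightarrow> int)" where
  "mon w = (\<lambda>v. if v = w then 1 else 0)"

definition fadd :: "('a list \<Rightarrow> int) \<Rightarrow> ('a list \<Rightarrow> int) \<Rightarrow> ('a list \<Rightarrow> int)" where
  "fadd f g = (\<lambda>w. f w + g w)"

definition fsub :: "('a list \<Rightarrow> int) \<Rightarrow> ('a list \<Rightarrow> int) \<Rightarrow> ('a list \<Rightarrow> int)" where
  "fsub f g = (\<lambda>w. f w - g w)"

definition fin_supp :: "('a list \<Rightarrow> int) \<Rightarrow> bool" where
  "fin_supp f \<longleftrightarrow> finite {w. f w \<noteq> 0}"

definition nc_mult :: "('a list \<Rightarrow> int) \<Rightarrow> ('a list \<Rightarrow> int) \<Rightarrow> ('a list \<Rightarrow> int)" where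
  "nc_mult f g = (\<lambda>w. \<Sum>i\<le>length w. f (take i w) * g (drop i w))"

definition plac_gens :: "('a::order list \<Rightarrow> int) set" where
  "plac_gens =
     {fsub (mon [b, a, c]) (mon [b, c, a]) | a b c. a < b \<and> \<not> c < b \<and> a < c}
   \<union> {fsub (mon [c, a, b]) (mon [a, c, b]) | a b c. \<not> b < a \<and> b < c \<and> a < c}
   \<union> {fsub (mon [c, a, b]) (mon [b, c, a]) | a b c. incomp a b \<and> incomp b c \<and> a < c}"

inductive_set two_sided_ideal :: "('a list \<Rightarrow> int) set \<Rightarrow> ('a list \<Rightarrow> int) set"
  for G where
  gen: "g \<in> G \<Longrightarrow> g \<in> two_sided_ideal G"
| zero: "(\<lambda>_. 0) \<in> two_sided_ideal G"
| add: "f \<in> two_sided_ideal G \<Longrightarrow> g \<in> two_sided_ideal G \<Longrightarrow> fadd f g \<in> two_sided_ideal G"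
| lmult: "fin_supp p \<Longrightarrow> f \<in> two_sided_ideal G \<Longrightarrow> nc_mult p f \<in> two_sided_ideal G"
| rmult: "fin_supp p \<Longrightarrow> f \<in> two_sided_ideal G \<Longrightarrow> nc_mult f p \<in> two_sided_ideal G"

definition I_plac :: "('a::order list \<Rightarrow> int) set" where
  "I_plac = two_sided_ideal plac_gens"

text \<open>The word a_n a_{n-1} ... a_1 for a :: nat => 'a.\<close>
definition word_down :: "nat \<Rightarrow> (nat \<Rightarrow> 'a) \<Rightarrow> 'a list" where
  "word_down n a = map (\<lambda>j. a (n - j)) [0..<n]"

end

theory Submission
  imports Defs
begin

definition eqv :: "'a::order list \<Rightarrow> 'a list \<Rightarrow> bool" where
  "eqv u w \<longleftrightarrow> fsub (mon u) (mon w) \<in> I_plac"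

lemma mon_mult: "nc_mult (mon u) (mon w) = mon (u @ w)"
proof (rule ext)
  fix x
  have "nc_mult (mon u) (mon w) x = (\<Sum>i\<le>length x. if i = length u then (if x = u @ w then 1 else 0) else 0)"
    unfolding nc_mult_def
  proof (rule sum.cong[OF refl])
    fix i assume "i \<in> {..length x}"
    hence il: "i \<le> length x" by simp
    have "(take i x = u \<and> drop i x = w) = (i = length u \<and> x = u @ w)"
    proof
      assume h: "take i x = u \<and> drop i x = w"
      hence "x = u @ w" by (metis append_take_drop_id)
      moreover have "length u = i" using h il by auto
      ultimately show "i = length u \<and> x = u @ w" by simp
    next
      assume "i = length u \<and> x = u @ w"
      thus "take i x = u \<and> drop i x = w" by simp
    qed
    moreover have "mon u (take i x) * mon w (drop i x) = (if take i x = u \<and> drop i x = w then 1 else 0)"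
      by (simp add: mon_def)
    ultimately show "mon u (take i x) * mon w (drop i x) = (if i = length u then (if x = u @ w then 1 else 0) else 0)"
      by simp
  qed
  also have "\<dots> = mon (u @ w) x"
    by (auto simp: mon_def)
  finally show "nc_mult (mon u) (mon w) x = mon (u @ w) x" .
qed

lemma nc_mult_fsub_right: "nc_mult p (fsub f g) = fsub (nc_mult p f) (nc_mult p g)"
  unfolding nc_mult_def fsub_def by (simp add: right_diff_distrib sum_subtractf)

lemma nc_mult_fsub_left: "nc_mult (fsub f g) p = fsub (nc_mult f p) (nc_mult g p)"
  unfolding nc_mult_def fsub_def by (simp add: left_diff_distrib sum_subtractf)

lemma fin_supp_mon: "fin_supp (mon p)"
  unfolding fin_supp_def mon_def by simp

lemma eqv_refl: "eqv u u"
proof -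
  have "fsub (mon u) (mon u) = (\<lambda>_. 0)" by (simp add: fsub_def)
  thus ?thesis unfolding eqv_def I_plac_def by (simp add: two_sided_ideal.zero)
qed

lemma eqv_trans: "eqv u v \<Longrightarrow> eqv v w \<Longrightarrow> eqv u w"
proof -
  assume "eqv u v" "eqv v w"
  hence "fadd (fsub (mon u) (mon v)) (fsub (mon v) (mon w)) \<in> I_plac"
    unfolding eqv_def I_plac_def by (simp add: two_sided_ideal.add)
  moreover have "fadd (fsub (mon u) (mon v)) (fsub (mon v) (mon w)) = fsub (mon u) (mon w)"
    by (simp add: fadd_def fsub_def)
  ultimately show ?thesis unfolding eqv_def by simp
qed

definition neg1 :: "'a list \<Rightarrow> int" where "neg1 x = (if x = [] then -1 else 0)"

lemma neg1_mult: "nc_mult neg1 f = (\<lambda>x. - f x)"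
proof (rule ext)
  fix x
  have "nc_mult neg1 f x = (\<Sum>i\<le>length x. if i = 0 then - f x else 0)"
    unfolding nc_mult_def
    by (rule sum.cong[OF refl]) (auto simp: neg1_def)
  also have "\<dots> = - f x" by simp
  finally show "nc_mult neg1 f x = - f x" .
qed

lemma eqv_sym: "eqv u w \<Longrightarrow> eqv w u"
proof -
  assume "eqv u w"
  moreover have "fin_supp (neg1 :: 'a list \<Rightarrow> int)"
  proof -
    have "{w. (neg1::'a list \<Rightarrow> int) w \<noteq> 0} = {[]}" by (auto simp: neg1_def)
    thus ?thesis unfolding fin_supp_def by simp
  qed
  ultimately have "nc_mult neg1 (fsub (mon u) (mon w)) \<in> I_plac"
    unfolding eqv_def I_plac_def by (simp add: two_sided_ideal.lmult)
  moreover have "nc_mult neg1 (fsub (mon u) (mon w)) = fsub (mon w) (mon u)"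
    by (simp add: neg1_mult fsub_def)
  ultimately show ?thesis unfolding eqv_def by simp
qed

lemma eqv_ctx: "eqv u w \<Longrightarrow> eqv (p @ u @ s) (p @ w @ s)"
proof -
  assume "eqv u w"
  hence "nc_mult (nc_mult (mon p) (fsub (mon u) (mon w))) (mon s) \<in> I_plac"
    unfolding eqv_def I_plac_def
    by (intro two_sided_ideal.rmult two_sided_ideal.lmult fin_supp_mon)
  thus ?thesis
    unfolding eqv_def by (simp add: nc_mult_fsub_left nc_mult_fsub_right mon_mult)
qed

lemma eqv_basic:
  fixes a b c :: "'a::order"
  assumes "a < b" "\<not> c < b" "a < c"
  shows "eqv [b, a, c] [b, c, a]"
proof -
  have "fsub (mon [b, a, c]) (mon [b, c, a]) \<in> plac_gens"
    unfolding plac_gens_def using assms by blast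
  thus ?thesis unfolding eqv_def I_plac_def by (rule two_sided_ideal.gen)
qed

lemma move:
  fixes c :: "'a::order"
  shows "sorted_wrt (>) (x1 # xs) \<Longrightarrow> \<not> c < x1 \<Longrightarrow> \<forall>z\<in>set xs. z < c
    \<Longrightarrow> eqv (x1 # xs @ [c]) (x1 # c # xs)"
proof (induction xs arbitrary: x1)
  case Nil
  then show ?case by (simp add: eqv_refl)
next
  case (Cons y ys)
  have yx: "y < x1" using Cons.prems(1) by simp
  have yc: "y < c" using Cons.prems(3) by simp
  have "eqv (y # ys @ [c]) (y # c # ys)"
    using Cons.IH[of y] Cons.prems yc by auto
  hence e1: "eqv (x1 # y # ys @ [c]) (x1 # y # c # ys)"
    using eqv_ctx[of _ _ "[x1]" "[]"] by simp
  have "eqv [x1, y, c] [x1, c, y]" using eqv_basic yx Cons.prems(2) yc by blast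
  hence e2: "eqv (x1 # y # c # ys) (x1 # c # y # ys)"
    using eqv_ctx[of "[x1, y, c]" "[x1, c, y]" "[]" ys] by simp
  show ?case using eqv_trans[OF e1 e2] by simp
qed

lemma word_down_Suc: "word_down (Suc n) a = a (Suc n) # word_down n a"
  unfolding word_down_def
  by (simp add: upt_conv_Cons map_Suc_upt[symmetric] del: upt_Suc)

lemma sd_sorted: "strictly_decr w = sorted_wrt (>) w"
  unfolding strictly_decr_def
  by (subst sorted_wrt_iff_nth_Suc_transp) (auto simp: transp_def)

lemma main_aux:
  fixes a b :: "nat \<Rightarrow> 'a::order"
  shows "sorted_wrt (>) (word_down n a @ v) \<Longrightarrow> sorted_wrt (>) (word_down n b @ v)
    \<Longrightarrow> \<forall>i\<in>{1..n}. \<not> b i < a i \<Longrightarrow> \<forall>i\<in>{1..n-1}. a i < b (i + 1)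
    \<Longrightarrow> eqv (word_down n a @ v @ word_down n b) (word_down n a @ word_down n b @ v)"
proof (induction n)
  case 0
  then show ?case by (simp add: word_down_def eqv_refl)
next
  case (Suc n)
  define A where "A = a (Suc n)"
  define B where "B = b (Suc n)"
  define a' where "a' = word_down n a"
  define b' where "b' = word_down n b"
  have sa: "sorted_wrt (>) (A # a' @ v)" using Suc.prems(1) by (simp add: word_down_Suc A_def a'_def)
  have sb: "sorted_wrt (>) (B # b' @ v)" using Suc.prems(2) by (simp add: word_down_Suc B_def b'_def)
  have BA: "\<not> B < A" using Suc.prems(3) by (simp add: A_def B_def)
  have IH: "eqv (a' @ v @ b') (a' @ b' @ v)"
  proof -
    have h1: "sorted_wrt (>) (word_down n a @ v)" using sa unfolding a'_def by simp
    have h2: "sorted_wrt (>) (word_down n b @ v)" using sb unfolding b'_def by simp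
    have h3: "\<forall>i\<in>{1..n}. \<not> b i < a i" using Suc.prems(3) by auto
    have h4: "\<forall>i\<in>{1..n-1}. a i < b (i + 1)" using Suc.prems(4) by auto
    show ?thesis using Suc.IH[OF h1 h2 h3 h4] unfolding a'_def b'_def .
  qed
  have ltv: "\<forall>z\<in>set v. z < B" using sb by simp
  have lta: "\<forall>z\<in>set a'. z < B"
  proof
    fix z assume z: "z \<in> set a'"
    then obtain m where n: "n = Suc m" unfolding a'_def word_down_def by (cases n) auto
    have "a' = a n # word_down m a" unfolding a'_def n by (simp add: word_down_Suc)
    hence "z = a n \<or> z < a n" using z sa by auto
    moreover have "a n < B" using Suc.prems(4) n unfolding B_def by auto
    ultimately show "z < B" by auto
  qed
  have m1: "eqv (A # (a' @ v) @ [B]) (A # B # a' @ v)"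
    using move[of A "a' @ v" B] sa BA ltv lta by auto
  have e1: "eqv (A # a' @ v @ B # b') (A # B # a' @ v @ b')"
    using eqv_ctx[OF m1, of "[]" b'] by simp
  have e2: "eqv (A # B # a' @ v @ b') (A # B # a' @ b' @ v)"
    using eqv_ctx[OF IH, of "[A, B]" "[]"] by simp
  have sa2: "sorted_wrt (>) (A # a')" using sa by (simp add: sorted_wrt_append)
  have m2: "eqv (A # a' @ [B]) (A # B # a')"
    using move[of A a' B] sa2 BA lta by auto
  have e3: "eqv (A # a' @ B # b' @ v) (A # B # a' @ b' @ v)"
    using eqv_ctx[OF m2, of "[]" "b' @ v"] by simp
  have "eqv (A # a' @ v @ B # b') (A # a' @ B # b' @ v)"
    using eqv_trans[OF eqv_trans[OF e1 e2] eqv_sym[OF e3]] .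
  thus ?case by (simp add: word_down_Suc A_def B_def a'_def b'_def)
qed

theorem mainTheorem14:
  fixes a b :: "nat \<Rightarrow> 'a::{order,finite}" and v :: "'a list" and n :: nat
  assumes "three_one_free TYPE('a)"
    and "strictly_decr (word_down n a @ v)"
    and "strictly_decr (word_down n b @ v)"
    and "\<forall>i\<in>{1..n}. \<not> b i < a i"
    and "\<forall>i\<in>{1..n-1}. a i < b (i + 1)"
  shows "fsub (nc_mult (nc_mult (mon (word_down n a)) (mon v)) (mon (word_down n b)))
         (nc_mult (nc_mult (mon (word_down n a)) (mon (word_down n b))) (mon v)) \<in> I_plac"
proof -
  have "eqv (word_down n a @ v @ word_down n b) (word_down n a @ word_down n b @ v)"
    using main_aux assms(2-5) by (simp add: sd_sorted)
  thus ?thesis unfolding eqv_def by (simp add: mon_mult)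
qed

end
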